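(* Let $\delta\in(0,1)$ and $c_2(\delta,d):=\mathbb{E}_{\mathbf{x}\sim U^d}[\mathbf{x}[2]^2\mid\mathbf{x}[1]\ge\delta]$. Then $$c_2(\delta,d)\ge\frac{1}{3d}\left(\frac34-\frac12\delta-\frac14\delta^2\right)^3.$$
   Context: $U^d$ denotes the uniform distribution over the $d$-dimensional unit sphere; $\mathbf{x}[i]$ is the $i$-th coordinate of $\mathbf{x}$. *)

theory Defs
  imports "HOL-Analysis.Analysis"
begin

text \<open>Uniform distribution U^d on the unit sphere of R^d (d = CARD('n)):
  the law of y / |y| where y is uniform on the open unit ball.\<close>
definition sphere_unif :: "(real ^ 'n) measure" where
  "sphere_unif = distr (uniform_measure lborel (ball 0 1)) borel (\<lambda>y. y /\<^sub>R norm y)"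

definition cond_expect_event :: "'a measure \<Rightarrow> ('a \<Rightarrow> real) \<Rightarrow> 'a set \<Rightarrow> real" where
  "cond_expect_event M f A = (LINT x:A|M. f x) / measure M A"

text \<open>c_2(delta,d) = E_{x ~ U^d}[ x[j]^2 | x[i] >= delta ] for coordinates i (first) and j (second).\<close>
definition c2 :: "real \<Rightarrow> 'n::finite \<Rightarrow> 'n \<Rightarrow> real" where
  "c2 \<delta> i j = cond_expect_event (sphere_unif :: (real ^ 'n) measure) (\<lambda>x. (x $ j)\<^sup>2) {x. x $ i \<ge> \<delta>}"

end

theory Submission
  imports Defs
begin


lemma product_sigma_finite_lborel: "product_sigma_finite (\<lambda>_. lborel)"
  by (simp add: product_sigma_finite_def sigma_finite_lborel)

lemma lborel_split:
  fixes E :: "'a::euclidean_space"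
  assumes E: "E \<in> Basis" and h[measurable]: "h \<in> borel_measurable borel"
  shows "(\<integral>\<^sup>+x. h x \<partial>lborel) =
    (\<integral>\<^sup>+f. (\<integral>\<^sup>+y. h (y *\<^sub>R E + (\<Sum>b\<in>Basis-{E}. f b *\<^sub>R b)) \<partial>lborel) \<partial>(\<Pi>\<^sub>M b\<in>Basis-{E}. lborel))"
proof -
  interpret product_sigma_finite "\<lambda>_. lborel" by (rule product_sigma_finite_lborel)
  have B: "Basis = insert E (Basis - {E})" using E by auto
  have "(\<integral>\<^sup>+x. h x \<partial>lborel) = (\<integral>\<^sup>+f. h (\<Sum>b\<in>Basis. f b *\<^sub>R b) \<partial>(\<Pi>\<^sub>M b\<in>Basis. lborel))"
    by (subst lborel_eq) (simp add: nn_integral_distr)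
  also have "\<dots> = (\<integral>\<^sup>+f. h (\<Sum>b\<in>insert E (Basis-{E}). f b *\<^sub>R b) \<partial>(\<Pi>\<^sub>M b\<in>insert E (Basis-{E}). lborel))"
    using B by simp
  also have "\<dots> = (\<integral>\<^sup>+f. (\<integral>\<^sup>+y. h (\<Sum>b\<in>insert E (Basis-{E}). (f(E:=y)) b *\<^sub>R b) \<partial>lborel) \<partial>(\<Pi>\<^sub>M b\<in>Basis-{E}. lborel))"
    by (rule product_nn_integral_insert) auto
  also have "\<dots> = (\<integral>\<^sup>+f. (\<integral>\<^sup>+y. h (y *\<^sub>R E + (\<Sum>b\<in>Basis-{E}. f b *\<^sub>R b)) \<partial>lborel) \<partial>(\<Pi>\<^sub>M b\<in>Basis-{E}. lborel))"
  proof -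
    have "\<And>f y. (\<Sum>b\<in>insert E (Basis-{E}). (f(E:=y)) b *\<^sub>R b) = y *\<^sub>R E + (\<Sum>b\<in>Basis-{E}. f b *\<^sub>R b)"
      by (subst sum.insert) (auto intro!: sum.cong)
    then show ?thesis by simp
  qed
  finally show ?thesis .
qed

definition shear :: "'a::euclidean_space \<Rightarrow> 'a \<Rightarrow> real \<Rightarrow> 'a \<Rightarrow> 'a" where
  "shear E F a x = x + (a * (x \<bullet> F)) *\<^sub>R E"

lemma shear_measurable[measurable]: "shear E F a \<in> borel_measurable borel"
  unfolding shear_def by measurable

lemma nn_integral_shear:
  fixes E F :: "'a::euclidean_space"
  assumes E: "E \<in> Basis" and F: "F \<in> Basis" and EF: "E \<noteq> F" and g[measurable]: "g \<in> borel_measurable borel"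
  shows "(\<integral>\<^sup>+x. g (shear E F a x) \<partial>lborel) = (\<integral>\<^sup>+x. g x \<partial>lborel)"
proof -
  have EF0: "E \<bullet> F = 0" using E F EF by (simp add: inner_not_same_Basis)
  have inner: "(\<integral>\<^sup>+y. g (shear E F a (y *\<^sub>R E + r)) \<partial>lborel) = (\<integral>\<^sup>+y. g (y *\<^sub>R E + r) \<partial>lborel)" for r
  proof -
    have "\<And>y. shear E F a (y *\<^sub>R E + r) = (a * (r \<bullet> F) + y) *\<^sub>R E + r"
      by (simp add: shear_def inner_add_left EF0 algebra_simps)
    then have "(\<integral>\<^sup>+y. g (shear E F a (y *\<^sub>R E + r)) \<partial>lborel) = (\<integral>\<^sup>+y. g (((+) (a * (r \<bullet> F)) y) *\<^sub>R E + r) \<partial>lborel)"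
      by simp
    also have "\<dots> = (\<integral>\<^sup>+y. g (y *\<^sub>R E + r) \<partial>distr lborel borel ((+) (a * (r \<bullet> F))))"
      by (subst nn_integral_distr) auto
    also have "\<dots> = (\<integral>\<^sup>+y. g (y *\<^sub>R E + r) \<partial>lborel)"
      by (simp add: lborel_distr_plus)
    finally show ?thesis .
  qed
  show ?thesis
    by (subst lborel_split[OF E], measurable, subst lborel_split[OF E], measurable) (simp add: inner)
qed


lemma distr_shear:
  fixes E F :: "'a::euclidean_space"
  assumes E: "E \<in> Basis" and F: "F \<in> Basis" and EF: "E \<noteq> F"
  shows "distr lborel borel (shear E F a) = lborel"
proof (rule measure_eqI)
  fix X assume X: "X \<in> sets (distr lborel borel (shear E F a))"
  then have [measurable]: "X \<in> sets borel" by simp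
  have "emeasure (distr lborel borel (shear E F a)) X = (\<integral>\<^sup>+x. indicator X x \<partial>distr lborel borel (shear E F a))"
    by simp
  also have "\<dots> = (\<integral>\<^sup>+x. indicator X (shear E F a x) \<partial>lborel)"
    by (subst nn_integral_distr) auto
  also have "\<dots> = (\<integral>\<^sup>+x. indicator X x \<partial>lborel)"
    by (rule nn_integral_shear[OF E F EF]) measurable
  also have "\<dots> = emeasure lborel X" by simp
  finally show "emeasure (distr lborel borel (shear E F a)) X = emeasure lborel X" .
qed simp

definition rot :: "'n::finite \<Rightarrow> 'n \<Rightarrow> real \<Rightarrow> real \<Rightarrow> real^'n \<Rightarrow> real^'n" where
  "rot i j c s x = (\<chi> k. if k = i then c * x$i - s * x$j else if k = j then s * x$i + c * x$j else x$k)"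

lemma shear_axis:
  "shear (axis i (1::real)) (axis j 1) a x = (\<chi> k. if k = i then x$i + a * x$j else x$k)"
proof -
  have "x \<bullet> axis j 1 = x$j" by (simp add: inner_axis)
  then show ?thesis by (simp add: shear_def vec_eq_iff axis_def)
qed

lemma rot_shears:
  assumes "i \<noteq> j" and cs: "c\<^sup>2 + s\<^sup>2 = 1" and c: "c > -1"
  shows "rot i j c s = shear (axis i 1) (axis j 1) (- (s/(1+c))) \<circ> shear (axis j 1) (axis i 1) s \<circ> shear (axis i 1) (axis j 1) (- (s/(1+c)))"
proof -
  define \<tau> where "\<tau> = s/(1+c)"
  have h2: "\<tau> * c = s - \<tau>" using c by (simp add: \<tau>_def field_simps)
  have h1: "\<tau> * s = 1 - c" using cs c
    by (simp add: \<tau>_def field_simps power2_eq_square)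
  have e1: "c * xi - s * xj = xi - \<tau> * xj - \<tau> * (xj + s * (xi - \<tau> * xj))" for xi xj
    using h1 h2 by algebra
  have e2: "s * xi + c * xj = xj + s * (xi - \<tau> * xj)" for xi xj
    using h1 h2 by algebra
  show ?thesis unfolding \<tau>_def[symmetric] using assms
    by (auto simp: fun_eq_iff rot_def shear_axis vec_eq_iff e1 e2)
qed

lemma inner_axis1: "x \<bullet> axis k (1::real) = x$k"
  by (simp add: inner_axis)

lemma rot_measurable[measurable]: "rot i j c s \<in> borel_measurable borel"
proof -
  have "rot i j c s = (\<lambda>x. x + ((c - 1) * (x \<bullet> axis i 1) - s * (x \<bullet> axis j 1)) *\<^sub>R axis i 1
     + (if i = j then 0 else (s * (x \<bullet> axis i 1) + (c - 1) * (x \<bullet> axis j 1))) *\<^sub>R axis j 1)"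
    unfolding inner_axis1 by (auto simp: fun_eq_iff rot_def vec_eq_iff axis_def algebra_simps)
  then show ?thesis by simp
qed

lemma distr_rot:
  assumes "i \<noteq> j" and cs: "c\<^sup>2 + s\<^sup>2 = 1" and c: "c > -1"
  shows "distr lborel borel (rot i j c s) = lborel"
proof -
  have B: "axis i (1::real) \<in> Basis" "axis j (1::real) \<in> Basis" "axis i (1::real) \<noteq> axis j 1"
    using assms by (auto simp: axis_eq_axis)
  let ?a = "shear (axis i (1::real)) (axis j 1) (- (s/(1+c))) :: real^'a \<Rightarrow> _"
  let ?b = "shear (axis j (1::real)) (axis i 1) s :: real^'a \<Rightarrow> _"
  have "distr lborel borel (?a \<circ> ?b \<circ> ?a) = distr (distr (distr lborel borel ?a) borel ?b) borel ?a"
    by (simp add: distr_distr comp_assoc)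
  also have "\<dots> = lborel" using B by (simp add: distr_shear)
  finally show ?thesis using rot_shears[OF assms] by simp
qed

lemma sum_two:
  fixes f :: "'n::finite \<Rightarrow> real"
  assumes "i \<noteq> j"
  shows "(\<Sum>k\<in>UNIV. f k) = f i + f j + (\<Sum>k\<in>UNIV-{i,j}. f k)"
proof -
  have "(\<Sum>k\<in>UNIV. f k) = f i + (\<Sum>k\<in>UNIV-{i}. f k)" by (simp add: sum.remove)
  also have "(\<Sum>k\<in>UNIV-{i}. f k) = f j + (\<Sum>k\<in>UNIV-{i}-{j}. f k)"
    using assms by (subst sum.remove[of _ j]) auto
  finally show ?thesis by (simp add: Diff_insert2 [symmetric] insert_commute)
qed

lemma norm_rot:
  assumes "i \<noteq> j" and cs: "c\<^sup>2 + s\<^sup>2 = 1"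
  shows "norm (rot i j c s x) = norm x"
proof -
  have "rot i j c s x \<bullet> rot i j c s x = x \<bullet> x"
  proof -
    have "rot i j c s x \<bullet> rot i j c s x = (\<Sum>k\<in>UNIV. (rot i j c s x)$k * (rot i j c s x)$k)"
      by (simp add: inner_vec_def)
    also have "\<dots> = (c * x$i - s * x$j)^2 + (s * x$i + c * x$j)^2 + (\<Sum>k\<in>UNIV-{i,j}. x$k * x$k)"
      using assms by (subst sum_two[OF assms(1)]) (auto simp: rot_def power2_eq_square intro!: sum.cong)
    also have "(c * x$i - s * x$j)^2 + (s * x$i + c * x$j)^2 = (c^2 + s^2) * (x$i * x$i + x$j * x$j)"
      by (simp add: power2_eq_square algebra_simps)
    also have "\<dots> + (\<Sum>k\<in>UNIV-{i,j}. x$k * x$k) = (\<Sum>k\<in>UNIV. x$k * x$k)"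
      using cs by (subst sum_two[OF assms(1)]) simp
    also have "\<dots> = x \<bullet> x" by (simp add: inner_vec_def)
    finally show ?thesis .
  qed
  then show ?thesis by (simp add: norm_eq_sqrt_inner)
qed

lemma rot_scaleR: "rot i j c s (a *\<^sub>R x) = a *\<^sub>R rot i j c s x"
  by (simp add: rot_def vec_eq_iff algebra_simps)

lemma uniform_ball_rot:
  assumes "i \<noteq> j" and cs: "c\<^sup>2 + s\<^sup>2 = 1" and c: "c > -1"
  shows "distr (uniform_measure lborel (ball (0::real^'n) 1)) borel (rot i j c s) = uniform_measure lborel (ball 0 1)"
proof (rule measure_eqI)
  fix X assume "X \<in> sets (distr (uniform_measure lborel (ball (0::real^'n) 1)) borel (rot i j c s))"
  then have X[measurable]: "X \<in> sets borel" by simp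
  let ?R = "rot i j c s"
  let ?B = "ball (0::real^'n) 1"
  have RX[measurable]: "?R -` X \<in> sets borel" using measurable_sets[OF rot_measurable X] by simp
  have pre: "?R -` (?B \<inter> X) = ?B \<inter> ?R -` X" using norm_rot[OF assms(1,2)] by auto
  have "emeasure (distr (uniform_measure lborel ?B) borel ?R) X = emeasure (uniform_measure lborel ?B) (?R -` X)"
    by (subst emeasure_distr) auto
  also have "\<dots> = emeasure lborel (?B \<inter> ?R -` X) / emeasure lborel ?B"
    by (subst emeasure_uniform_measure) auto
  also have "emeasure lborel (?B \<inter> ?R -` X) = emeasure (distr lborel borel ?R) (?B \<inter> X)"
    by (subst emeasure_distr) (auto simp: pre[symmetric] vimage_Int)
  also have "\<dots> = emeasure lborel (?B \<inter> X)" by (simp add: distr_rot[OF assms])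
  also have "emeasure lborel (?B \<inter> X) / emeasure lborel ?B = emeasure (uniform_measure lborel ?B) X"
    by (subst emeasure_uniform_measure) auto
  finally show "emeasure (distr (uniform_measure lborel ?B) borel ?R) X = emeasure (uniform_measure lborel ?B) X" .
qed simp

lemma sphere_unif_rot:
  assumes "i \<noteq> j" and cs: "c\<^sup>2 + s\<^sup>2 = 1" and c: "c > -1"
  shows "distr (sphere_unif :: (real^'n) measure) borel (rot i j c s) = sphere_unif"
proof -
  let ?R = "rot i j c s"
  let ?U = "uniform_measure lborel (ball (0::real^'n) 1)"
  let ?N = "\<lambda>y::real^'n. y /\<^sub>R norm y"
  have comm: "?R \<circ> ?N = ?N \<circ> ?R"
    by (auto simp: fun_eq_iff rot_scaleR norm_rot[OF assms(1,2)])
  have "distr sphere_unif borel ?R = distr ?U borel (?R \<circ> ?N)"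
    unfolding sphere_unif_def by (subst distr_distr) auto
  also have "\<dots> = distr ?U borel (?N \<circ> ?R)" by (simp add: comm)
  also have "\<dots> = distr (distr ?U borel ?R) borel ?N"
    by (subst distr_distr) auto
  also have "\<dots> = sphere_unif" by (simp add: uniform_ball_rot[OF assms] sphere_unif_def)
  finally show ?thesis .
qed



lemma poly_ineq:
  fixes x :: real assumes "0 \<le> x" "x \<le> 1"
  shows "2 * x^2 * (2+x)^3 * (1 + x/16)^2 \<le> (1+x)^6"
proof -
  have y: "0 \<le> 1 - x" using assms by simp
  have le: "(1 + x/16)^2 \<le> (17/16)^2" using assms by (intro power_mono) auto
  have "2 * x^2 * (2+x)^3 * (1 + x/16)^2 \<le> 2 * x^2 * (2+x)^3 * (17/16)^2"
    using le assms by (intro mult_left_mono) auto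
  also have "(1+x)^6 - 2 * x^2 * (2+x)^3 * (17/16)^2 =
     (1-x)^6 + 12 * x * (1-x)^5 + 671/16 * x^2 * (1-x)^4 + 1941/32 * x^3 * (1-x)^3
     + 2355/64 * x^4 * (1-x)^2 + 1167/128 * x^5 * (1-x) + 389/128 * x^6"
    by algebra
  moreover have "0 \<le> (1-x)^6 + 12 * x * (1-x)^5 + 671/16 * x^2 * (1-x)^4 + 1941/32 * x^3 * (1-x)^3
     + 2355/64 * x^4 * (1-x)^2 + 1167/128 * x^5 * (1-x) + 389/128 * x^6"
    using assms y by (intro add_nonneg_nonneg mult_nonneg_nonneg) auto
  ultimately show ?thesis by linarith
qed

lemma frac_le_helper: "0 < b \<Longrightarrow> 0 < d \<Longrightarrow> a*d \<le> c*b \<Longrightarrow> a/b \<le> (c::real)/d"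
  by (simp add: field_simps)

lemma params:
  fixes \<delta> :: real assumes d: "0 < \<delta>" "\<delta> < 1"
  shows "\<exists>c s t w. c\<^sup>2 + s\<^sup>2 = 1 \<and> t\<^sup>2 + w\<^sup>2 = 1 \<and> 0 \<le> c \<and> c < t \<and> 0 \<le> s \<and> 0 \<le> w \<and> 0 < t
     \<and> 2 + 2*c < 4*t\<^sup>2 \<and> \<delta> \<le> c*t - s*w \<and> (3/4 - \<delta>/2 - \<delta>\<^sup>2/4)^3 \<le> 2*w\<^sup>2"
proof -
  define x where "x = (1-\<delta>)/(1+\<delta>)"
  have x0: "0 < x" and x1: "x < 1" using d by (auto simp: x_def field_simps)
  have dx: "\<delta> = (1-x)/(1+x)" using d by (simp add: x_def field_simps)
  define h where "h = sqrt x"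
  have h0: "0 \<le> h" and hh: "h^2 = x" using x0 by (auto simp: h_def)
  define t where "t = (1 - x/16)/(1 + x/16)"
  define w where "w = (h/2)/(1 + x/16)"
  define c where "c = (1 - 16*x/49)/(1 + 16*x/49)"
  define s where "s = (8*h/7)/(1 + 16*x/49)"
  have B0: "1 + 16*x/49 \<noteq> 0" "1 + x/16 \<noteq> 0" using x0 by auto
  have cs1: "c\<^sup>2 + s\<^sup>2 = 1"
  proof -
  have "s\<^sup>2 = 4*(16*x/49)/(1 + 16*x/49)^2" using hh unfolding s_def
    by (simp add: power_divide field_simps power2_eq_square)
  then have "c\<^sup>2 + s\<^sup>2 = ((1 - 16*x/49)^2 + 4*(16*x/49))/(1 + 16*x/49)^2"
    by (simp add: c_def power_divide add_divide_distrib)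
  also have "(1 - 16*x/49)^2 + 4*(16*x/49) = (1 + 16*x/49)^2" by (simp add: power2_eq_square field_simps)
  finally show "c\<^sup>2 + s\<^sup>2 = 1" using B0 by simp
  qed
  have tw1: "t\<^sup>2 + w\<^sup>2 = 1"
  proof -
  have "w\<^sup>2 = 4*(x/16)/(1 + x/16)^2" using hh unfolding w_def
    by (simp add: power_divide field_simps power2_eq_square)
  then have "t\<^sup>2 + w\<^sup>2 = ((1 - x/16)^2 + 4*(x/16))/(1 + x/16)^2"
    by (simp add: t_def power_divide add_divide_distrib)
  also have "(1 - x/16)^2 + 4*(x/16) = (1 + x/16)^2" by (simp add: power2_eq_square field_simps)
  finally show "t\<^sup>2 + w\<^sup>2 = 1" using B0 by simp
  qed
  note cs1 tw1
  moreover
  have "0 \<le> c" using x0 x1 by (simp add: c_def)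
  moreover have "c < t" using x0 x1 by (simp add: c_def t_def field_simps)
  moreover have "0 \<le> s" "0 \<le> w" "0 < t" using x0 x1 h0 by (auto simp: s_def w_def t_def)
  moreover have "2 + 2*c < 4*t\<^sup>2"
  proof -
    have "(1+x/16)^2 < (1 - x/16)^2 * (1 + 16*x/49)"
    proof -
      have "(1 - x/16)^2 * (1 + 16*x/49) - (1+x/16)^2 = x * (15/196 - 8*x/196 + x^2/784)"
        by (simp add: power2_eq_square field_simps)
      moreover have "0 < x * (15/196 - 8*x/196 + x^2/784)" using x0 x1
        by (intro mult_pos_pos) (auto intro: add_pos_nonneg)
      ultimately show ?thesis by linarith
    qed
    then have lt: "(1+x/16)^2 * 1 < (1 - x/16)^2 * (1 + 16*x/49)" by simp
    have p1: "0 < 1 + 16*x/49" "0 < (1+x/16)^2" using x0 by auto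
    have e1: "2+2*c = 4/(1+16*x/49)" using p1 by (simp add: c_def field_simps)
    have e2: "4*t\<^sup>2 = 4*((1-x/16)^2/(1+x/16)^2)" by (simp add: t_def power_divide)
    have "1/(1+16*x/49) < (1-x/16)^2/(1+x/16)^2"
      using lt p1 by (simp add: divide_less_eq less_divide_eq mult.commute)
    then show ?thesis unfolding e1 e2 by simp

  qed
  moreover have "\<delta> \<le> c*t - s*w"
  proof -
    have sw: "s*w = (4*x/7) / ((1 + 16*x/49)*(1 + x/16))"
      using hh x0 by (simp add: s_def w_def field_simps power2_eq_square)
    have "0 \<le> (x/784)*(510 - 448*x + 32*x^2)" using x0 x1 by (intro mult_nonneg_nonneg) auto
    moreover have "((1 - 16*x/49)*(1 - x/16) - 4*x/7)*(1+x) - (1-x)*(1+x/16)*(1+16*x/49) = (x/784)*(510 - 448*x + 32*x^2)"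
      by (simp add: power2_eq_square field_simps)
    ultimately have ineq0: "(1-x)*(1+x/16)*(1+16*x/49) \<le> ((1 - 16*x/49)*(1 - x/16) - 4*x/7)*(1+x)"
      by linarith
    have eqm: "(1-x)*((1+16*x/49)*(1+x/16)) = (1-x)*(1+x/16)*(1+16*x/49)" by (simp only: mult_ac)
    have ineq: "(1-x)*((1+16*x/49)*(1+x/16)) \<le> ((1 - 16*x/49)*(1 - x/16) - 4*x/7)*(1+x)"
      unfolding eqm by (rule ineq0)
    moreover have "c*t - s*w = ((1 - 16*x/49)*(1 - x/16) - 4*x/7)/((1 + 16*x/49)*(1 + x/16))"
    proof -
      have "c*t = ((1 - 16*x/49)*(1 - x/16))/((1 + 16*x/49)*(1 + x/16))" by (simp add: c_def t_def)
      then show ?thesis unfolding sw by (simp add: diff_divide_distrib)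
    qed
    moreover have "0 < (1 + 16*x/49)*(1 + x/16)" "0 < 1 + x" using x0 by auto
    ultimately show ?thesis unfolding dx
      using frac_le_helper[of "1+x" "(1 + 16*x/49)*(1 + x/16)" "1-x" "(1 - 16*x/49)*(1 - x/16) - 4*x/7", OF _ _ ineq]
      by simp
  qed
  moreover have "(3/4 - \<delta>/2 - \<delta>\<^sup>2/4)^3 \<le> 2*w\<^sup>2"
  proof -
    have "1 + x \<noteq> 0" using x0 by auto
    have K: "3/4 - \<delta>/2 - \<delta>\<^sup>2/4 = x*(2+x)/(1+x)^2"
    proof -
      have d1: "\<delta>*(1+x) = 1-x" using \<open>1 + x \<noteq> 0\<close> unfolding dx by simp
      have "(3 - 2*\<delta> - \<delta>^2)*(1+x)^2 = 3*(1+x)^2 - 2*(\<delta>*(1+x))*(1+x) - (\<delta>*(1+x))^2"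
        by algebra
      also have "\<dots> = 4*(x*(2+x))" unfolding d1 by algebra
      finally have "(3 - 2*\<delta> - \<delta>^2)/4 = x*(2+x)/(1+x)^2" using \<open>1 + x \<noteq> 0\<close>
        by (simp add: eq_divide_eq)
      moreover have "3/4 - \<delta>/2 - \<delta>\<^sup>2/4 = (3 - 2*\<delta> - \<delta>^2)/4" by (simp add: field_simps)
      ultimately show ?thesis by simp
    qed
    have w2: "2*w\<^sup>2 = (x/2)/(1+x/16)^2" using hh x0 by (simp add: w_def field_simps power2_eq_square)
    have "x*(2 * x^2 * (2+x)^3 * (1 + x/16)^2) \<le> x*(1+x)^6"
      using poly_ineq[of x] x0 x1 by (intro mult_left_mono) auto
    then have "(x*(2+x))^3 * (1+x/16)^2 \<le> (x/2) * ((1+x)^2)^3"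
    proof -
      have a1: "2*((x*(2+x))^3 * p) = x*(2 * x^2 * (2+x)^3 * p)" for p by algebra
      have a2: "((1+x)^2)^3 = (1+x)^6" by (simp add: power_mult[symmetric])
      show ?thesis unfolding a2 using a1[of "(1+x/16)^2"] \<open>x*(2 * x^2 * (2+x)^3 * (1 + x/16)^2) \<le> x*(1+x)^6\<close>
        by linarith
    qed
    then have "(x*(2+x))^3 / ((1+x)^2)^3 \<le> (x/2) / (1+x/16)^2"
      using x0 by (intro frac_le_helper) auto
    then show ?thesis unfolding K w2 by (simp add: power_divide)
  qed
  ultimately show ?thesis by blast
qed



lemma vec_nth_measurable[measurable]: "(\<lambda>x::real^'n. x$k) \<in> borel_measurable borel"
proof -
  have "(\<lambda>x::real^'n. x$k) = (\<lambda>x. x \<bullet> axis k 1)" by (simp add: inner_axis1)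
  then show ?thesis by simp
qed

lemma ball_pos: "emeasure lborel (ball (0::real^'n) 1) \<noteq> 0"
proof -
  have "unit_ball_vol (real CARD('n)) > 0" by simp
  then show ?thesis by (simp add: emeasure_ball, linarith)
qed

lemma ball_lt: "emeasure lborel (ball (0::real^'n) 1) < top"
  using emeasure_lborel_ball_finite[of "0::real^'n" 1] by simp

lemma ball_fin: "emeasure lborel (ball (0::real^'n) 1) \<noteq> top"
  by (rule ball_lt[THEN less_imp_neq])

lemma space_sphere_unif[simp]: "space (sphere_unif :: (real^'n) measure) = UNIV"
  by (simp add: sphere_unif_def)

lemma sets_sphere_unif[simp, measurable_cong]: "sets (sphere_unif :: (real^'n) measure) = sets borel"
  by (simp add: sphere_unif_def)

lemma emeasure_sphere_UNIV: "emeasure (sphere_unif :: (real^'n) measure) UNIV = 1"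
proof -
  have "emeasure lborel (ball (0::real^'n) 1) / emeasure lborel (ball (0::real^'n) 1) = 1"
    by (rule ennreal_divide_self[OF ball_pos]) (rule ball_lt)
  then show ?thesis unfolding sphere_unif_def by (subst emeasure_distr) auto
qed

lemma finite_measure_sphere_unif: "finite_measure (sphere_unif :: (real^'n) measure)"
  by (rule finite_measureI) (simp add: emeasure_sphere_UNIV)

lemma AE_sphere_norm: "AE x in (sphere_unif :: (real^'n) measure). norm x = 1"
proof -
  have "AE y in uniform_measure lborel (ball (0::real^'n) 1). norm (y /\<^sub>R norm y) = 1"
  proof (subst AE_uniform_measure)
    show "emeasure lborel (ball (0::real^'n) 1) \<noteq> 0" by (rule ball_pos)
    show "emeasure lborel (ball (0::real^'n) 1) < \<infinity>" using ball_lt by simp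
    show "AE x in lborel. x \<in> ball 0 1 \<longrightarrow> norm (x /\<^sub>R norm x) = 1"
      using AE_lborel_singleton[of 0] by eventually_elim simp
  qed
  then show ?thesis unfolding sphere_unif_def
    by (subst AE_distr_iff) auto
qed

lemma integral_rot:
  assumes "i \<noteq> j" and cs: "c\<^sup>2 + s\<^sup>2 = 1" and c: "c > -1"
    and f[measurable]: "(f :: real^'n \<Rightarrow> real) \<in> borel_measurable borel"
  shows "(\<integral>x. f (rot i j c s x) \<partial>(sphere_unif :: (real^'n) measure)) = (\<integral>x. f x \<partial>sphere_unif)"
proof -
  have "(\<integral>x. f (rot i j c s x) \<partial>(sphere_unif :: (real^'n) measure)) = (\<integral>x. f x \<partial>distr sphere_unif borel (rot i j c s))"
  proof -
    have "rot i j c s \<in> measurable (sphere_unif :: (real^'n) measure) borel"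
      by (subst measurable_cong_sets[of _ borel _ borel]) auto
    then show ?thesis by (simp add: integral_distr)
  qed
  also have "\<dots> = (\<integral>x. f x \<partial>sphere_unif)" by (simp add: sphere_unif_rot[OF assms(1-3)])
  finally show ?thesis .
qed



lemma G1:
  fixes a b c s t :: real
  assumes ab: "a\<^sup>2 + b\<^sup>2 \<le> 1" and cs: "c\<^sup>2 + s\<^sup>2 = 1" and c0: "0 \<le> c" and t0: "0 < t"
    and ct: "2 + 2*c < 4*t\<^sup>2" and h1: "t \<le> a" and h2: "t \<le> c*a + s*b"
  shows False
proof -
  define p where "p = (1+c)*a + s*b"
  have p2t: "2*t \<le> p" using h1 h2 c0 unfolding p_def by (simp add: algebra_simps)
  have "(2*t)^2 \<le> p^2" using p2t t0 by (intro power_mono) auto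
  then have f1: "4*t^2 \<le> p^2" by (simp add: power_mult_distrib)
  have e1: "((1+c)^2+s^2)*(a^2+b^2) - p^2 = ((1+c)*b - s*a)^2" unfolding p_def by algebra
  have "(1+c)^2+s^2 = 2+2*c" using cs by (simp add: power2_eq_square algebra_simps)
  then have f2: "(2+2*c)*(a^2+b^2) - p^2 = ((1+c)*b - s*a)^2" using e1 by simp
  have f3: "(2+2*c)*(a^2+b^2) \<le> (2+2*c)*1" using ab c0 by (intro mult_left_mono) auto
  have f4: "0 \<le> ((1+c)*b - s*a)^2" by simp
  have "p^2 \<le> (2+2*c)*(a^2+b^2)" using f2 f4 by linarith
  then show False using f1 f3 ct by (smt (verit))
qed

lemma G3:
  fixes a b c s t :: real
  assumes ab: "a\<^sup>2 + b\<^sup>2 \<le> 1" and c0: "0 \<le> c" and t0: "0 < t" and ct: "c < t"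
    and h1: "t \<le> c*a + s*b" and h2: "t \<le> c*a - s*b"
  shows False
proof -
  have "0 \<le> b\<^sup>2" by simp
  then have "a\<^sup>2 \<le> 1" using ab by linarith
  then have "a\<^sup>2 \<le> 1\<^sup>2" by simp
  then have "a \<le> 1" by (rule power2_le_imp_le) simp
  then have "c*a \<le> c*1" using c0 by (intro mult_left_mono) auto
  then show False using h1 h2 ct by linarith
qed

lemma G4:
  fixes a b c s t w \<delta> :: real
  assumes ab: "a\<^sup>2 + b\<^sup>2 \<le> 1" and cs: "c\<^sup>2 + s\<^sup>2 = 1" and tw: "t\<^sup>2 + w\<^sup>2 = 1"
    and c0: "0 \<le> c" and s0: "0 \<le> s" and w0: "0 \<le> w" and t0: "0 < t"
    and d: "\<delta> \<le> c*t - s*w" and h: "t \<le> c*a + s*b"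
  shows "\<delta> \<le> a"
proof -
  define uu where "uu = c*a + s*b"
  define vv where "vv = c*b - s*a"
  have "uu^2 + vv^2 = (c^2+s^2)*(a^2+b^2)" unfolding uu_def vv_def by algebra
  then have uv: "uu^2 + vv^2 \<le> 1" using cs ab by simp
  have hau: "a = c*uu - s* vv"
  proof -
    have "c*uu - s* vv = (c^2+s^2)*a" unfolding uu_def vv_def by algebra
    then show ?thesis using cs by simp
  qed
  have "t^2 \<le> uu^2" using h t0 unfolding uu_def[symmetric] by (intro power_mono) auto
  then have "vv^2 \<le> w^2" using uv tw by linarith
  then have vw: "vv \<le> w" using w0 by (rule power2_le_imp_le)
  have "c*t \<le> c*uu" using h c0 unfolding uu_def[symmetric] by (intro mult_left_mono) auto
  moreover have "s* vv \<le> s*w" using vw s0 by (intro mult_left_mono) auto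
  ultimately show ?thesis using d hau by linarith
qed



lemma cap_pos:
  fixes \<delta> :: real and i :: "'n::finite"
  assumes d: "0 < \<delta>" "\<delta> < 1"
  shows "0 < measure (sphere_unif :: (real^'n) measure) {x. \<delta> \<le> x$i}"
proof -
  interpret finite_measure "sphere_unif :: (real^'n) measure" by (rule finite_measure_sphere_unif)
  define A where "A = {x::real^'n. \<delta> \<le> x$i}"
  have A[measurable]: "A \<in> sets borel" unfolding A_def by measurable
  let ?N = "\<lambda>y::real^'n. y /\<^sub>R norm y"
  let ?B = "ball (0::real^'n) 1"
  define y0 where "y0 = (1/2) *\<^sub>R axis i (1::real)"
  define \<rho> where "\<rho> = (1 - \<delta>)/4"
  have \<rho>0: "0 < \<rho>" using d by (simp add: \<rho>_def)
  have sub: "ball y0 \<rho> \<subseteq> ?B \<inter> ?N -` A"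
  proof
    fix y assume y: "y \<in> ball y0 \<rho>"
    then have dy: "norm (y - y0) < \<rho>" by (simp add: dist_norm norm_minus_commute)
    have ny0: "norm y0 = 1/2" by (simp add: y0_def)
    have "norm y \<le> norm y0 + norm (y - y0)" by (metis add_diff_cancel_left' norm_triangle_ineq2 add.commute diff_le_eq)
    then have ny: "norm y < 1/2 + \<rho>" using dy ny0 by linarith
    have "\<bar>(y - y0)$i\<bar> \<le> norm (y - y0)" by (rule component_le_norm_cart)
    moreover have "(y - y0)$i = y$i - 1/2" by (simp add: y0_def)
    ultimately have yi: "y$i > 1/2 - \<rho>" using dy by linarith
    have "\<rho> < 1/2" using d by (simp add: \<rho>_def)
    then have ypos: "0 < norm y" using yi component_le_norm_cart[of y i] by linarith
    have "\<delta> * (1/2 + \<rho>) \<le> 1/2 - \<rho>"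
    proof -
      have "0 \<le> (1 - \<delta>)^2" by simp
      then show ?thesis unfolding \<rho>_def by (simp add: power2_eq_square field_simps)
    qed
    moreover have "\<delta> * norm y \<le> \<delta> * (1/2 + \<rho>)" using ny d by (intro mult_left_mono) auto
    ultimately have "\<delta> * norm y \<le> y$i" using yi by linarith
    then have "\<delta> \<le> y$i / norm y" using ypos by (simp add: le_divide_eq)
    then have "?N y \<in> A" by (simp add: A_def divide_inverse mult.commute)
    moreover have "y \<in> ?B" using ny \<open>\<rho> < 1/2\<close> by simp
    ultimately show "y \<in> ?B \<inter> ?N -` A" by simp
  qed
  have NA[measurable]: "?N -` A \<in> sets borel" using measurable_sets[of ?N borel borel A] by simp
  have "0 < emeasure lborel (ball y0 \<rho>)"
  proof -
    have "unit_ball_vol (real CARD('n)) > 0" by simp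
    then show ?thesis using \<rho>0 by (simp add: emeasure_ball)
  qed
  also have "\<dots> \<le> emeasure lborel (?B \<inter> ?N -` A)" by (rule emeasure_mono[OF sub]) simp
  finally have pos: "0 < emeasure lborel (?B \<inter> ?N -` A)" .
  have "emeasure sphere_unif A = emeasure lborel (?B \<inter> ?N -` A) / emeasure lborel ?B"
    unfolding sphere_unif_def by (subst emeasure_distr) auto
  also have "\<dots> > 0" using pos ball_lt by (simp add: ennreal_zero_less_divide)
  finally have "0 < emeasure sphere_unif A" .
  then show ?thesis unfolding A_def[symmetric] by (simp add: emeasure_eq_measure)
qed



lemma integrable_sphere:
  fixes f :: "real^'n::finite \<Rightarrow> real"
  assumes f[measurable]: "f \<in> borel_measurable borel" and b: "\<And>x. norm x = 1 \<Longrightarrow> \<bar>f x\<bar> \<le> B"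
  shows "integrable sphere_unif f"
proof -
  interpret finite_measure "sphere_unif :: (real^'n) measure" by (rule finite_measure_sphere_unif)
  have "AE x in sphere_unif. norm (f x) \<le> B" using AE_sphere_norm by eventually_elim (simp add: b)
  moreover have "f \<in> borel_measurable sphere_unif"
    by (subst measurable_cong_sets[OF sets_sphere_unif refl]) simp
  ultimately show ?thesis by (intro integrable_const_bound[where B=B])
qed

lemma sq_le:
  fixes x :: "real^'n::finite"
  assumes "i \<noteq> j" "norm x = 1"
  shows "(x$i)\<^sup>2 + (x$j)\<^sup>2 \<le> 1"
proof -
  have "1 = x \<bullet> x" using assms(2) by (simp add: power2_norm_eq_inner[symmetric])
  also have "\<dots> = (\<Sum>k\<in>UNIV. x$k * x$k)" by (simp add: inner_vec_def)
  also have "\<dots> = x$i * x$i + x$j * x$j + (\<Sum>k\<in>UNIV-{i,j}. x$k * x$k)" by (rule sum_two[OF assms(1)])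
  finally show ?thesis
    using sum_nonneg[of "UNIV-{i,j}" "\<lambda>k. x$k * x$k"] by (simp add: power2_eq_square)
qed

lemma comp_le1:
  fixes x :: "real^'n::finite"
  assumes "norm x = 1" shows "\<bar>x$k\<bar> \<le> 1"
  using component_le_norm_cart[of x k] assms by simp



theorem lemma6:
  fixes \<delta> :: real and i j :: "'n::finite"
  assumes "0 < \<delta>" and "\<delta> < 1" and "i \<noteq> j"
  shows "c2 \<delta> i j \<ge> 1 / (3 * real CARD('n)) * (3/4 - \<delta>/2 - \<delta>\<^sup>2/4) ^ 3"
proof -
  obtain c s t w where cs: "c\<^sup>2 + s\<^sup>2 = 1" and tw: "t\<^sup>2 + w\<^sup>2 = 1" and c0: "0 \<le> c" and ct: "c < t"
    and s0: "0 \<le> s" and w0: "0 \<le> w" and t0: "0 < t" and ct2: "2 + 2*c < 4*t\<^sup>2"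
    and dl: "\<delta> \<le> c*t - s*w" and Kw: "(3/4 - \<delta>/2 - \<delta>\<^sup>2/4)^3 \<le> 2*w\<^sup>2"
    using params[OF assms(1,2)] by blast
  have c1: "c \<le> 1"
  proof -
    have "0 \<le> s\<^sup>2" by simp
    then have "c\<^sup>2 \<le> 1" using cs by linarith
    then have "c\<^sup>2 \<le> 1\<^sup>2" by simp
    then show ?thesis by (rule power2_le_imp_le) simp
  qed
  have td: "\<delta> \<le> t"
  proof -
    have "c*t \<le> 1*t" using c1 t0 by (intro mult_right_mono) auto
    moreover have "0 \<le> s*w" using s0 w0 by simp
    ultimately show ?thesis using dl by linarith
  qed
  interpret finite_measure "sphere_unif :: (real^'n) measure" by (rule finite_measure_sphere_unif)
  define A where "A = {x::real^'n. \<delta> \<le> x$i}"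
  define T where "T = {x::real^'n. t \<le> x$i}"
  have A[measurable]: "A \<in> sets borel" unfolding A_def by measurable
  have T[measurable]: "T \<in> sets borel" unfolding T_def by measurable
  define Nf where "Nf k = (\<integral>x. indicator A x * (x$k)\<^sup>2 \<partial>(sphere_unif :: (real^'n) measure))" for k
  have intN: "integrable (sphere_unif :: (real^'n) measure) (\<lambda>x. indicator A x * (x$k)\<^sup>2)" for k
  proof (rule integrable_sphere[where B=1])
    fix x :: "real^'n" assume "norm x = 1"
    then have "\<bar>x$k\<bar> \<le> 1" by (rule comp_le1)
    then have "(x$k)\<^sup>2 \<le> 1" by (simp add: abs_square_le_1)
    then show "\<bar>indicator A x * (x$k)\<^sup>2\<bar> \<le> 1" by (simp add: indicator_def)
  qed simp
  have intI: "integrable (sphere_unif :: (real^'n) measure) (indicator X :: _ \<Rightarrow> real)" if "X \<in> sets borel" for X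
    by (rule integrable_sphere[where B=1]) (use that in \<open>auto simp: indicator_def\<close>)
  define \<mu>A where "\<mu>A = measure (sphere_unif :: (real^'n) measure) A"
  define \<mu>T where "\<mu>T = measure (sphere_unif :: (real^'n) measure) T"
  have intA: "(\<integral>x. indicator A x \<partial>(sphere_unif :: (real^'n) measure)) = \<mu>A" by (simp add: \<mu>A_def)
  have intT: "(\<integral>x. indicator T x \<partial>(sphere_unif :: (real^'n) measure)) = \<mu>T" by (simp add: \<mu>T_def)
  have \<mu>A0: "0 < \<mu>A" unfolding \<mu>A_def A_def by (rule cap_pos[OF assms(1,2)])

  have sym: "Nf k = Nf j" if "k \<noteq> i" for k
  proof (cases "k = j")
    case True then show ?thesis by simp
  next
    case False
    let ?R = "rot j k 0 1 :: real^'n \<Rightarrow> real^'n"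
    have Ri: "(?R x)$i = x$i" for x using that assms(3) by (simp add: rot_def)
    have Rj: "(?R x)$j = - x$k" for x by (simp add: rot_def)
    have RA: "indicator A (?R x) = (indicator A x :: real)" for x by (simp add: A_def indicator_def Ri)
    have "Nf j = (\<integral>x. indicator A (?R x) * ((?R x)$j)\<^sup>2 \<partial>(sphere_unif :: (real^'n) measure))"
      unfolding Nf_def
      by (rule integral_rot[symmetric, where f="\<lambda>y. indicator A y * (y$j)\<^sup>2"]) (use False in auto)
    also have "\<dots> = Nf k" unfolding Nf_def by (simp add: RA Rj)
    finally show ?thesis by simp
  qed
  have sum: "(\<Sum>k\<in>UNIV. Nf k) = \<mu>A"
  proof -
    have "(\<Sum>k\<in>UNIV. Nf k) = (\<integral>x. (\<Sum>k\<in>UNIV. indicator A x * (x$k)\<^sup>2) \<partial>(sphere_unif :: (real^'n) measure))"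
      unfolding Nf_def
      using Bochner_Integration.integral_sum[where f="\<lambda>k x. indicator A x * (x$k)\<^sup>2" and I=UNIV and M="sphere_unif :: (real^'n) measure"] intN
      by simp
    also have "\<dots> = (\<integral>x. indicator A x \<partial>(sphere_unif :: (real^'n) measure))"
    proof (rule integral_cong_AE)
      show "(\<lambda>x. \<Sum>k\<in>UNIV. indicator A x * (x$k)\<^sup>2) \<in> borel_measurable (sphere_unif :: (real^'n) measure)"
        by measurable
      show "(indicator A :: _ \<Rightarrow> real) \<in> borel_measurable (sphere_unif :: (real^'n) measure)"
        by measurable
      show "AE x in sphere_unif. (\<Sum>k\<in>UNIV. indicator A x * (x$k)\<^sup>2) = (indicator A x :: real)"
        using AE_sphere_norm
      proof eventually_elim
        case (elim x)
        have "(\<Sum>k\<in>UNIV. (x$k)\<^sup>2) = x \<bullet> x" by (simp add: inner_vec_def power2_eq_square)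
        also have "\<dots> = 1" using elim by (simp add: power2_norm_eq_inner[symmetric])
        finally show ?case by (simp add: sum_distrib_left[symmetric])
      qed
    qed
    also have "\<dots> = \<mu>A" by (rule intA)
    finally show ?thesis .
  qed
  have split: "(\<Sum>k\<in>UNIV. Nf k) = Nf i + (real CARD('n) - 1) * Nf j"
  proof -
    have "(\<Sum>k\<in>UNIV. Nf k) = Nf i + (\<Sum>k\<in>UNIV-{i}. Nf k)" by (simp add: sum.remove)
    also have "(\<Sum>k\<in>UNIV-{i}. Nf k) = (\<Sum>k\<in>UNIV-{i}. Nf j)" by (rule sum.cong) (auto simp: sym)
    also have "\<dots> = real (CARD('n) - 1) * Nf j" by simp
    also have "real (CARD('n) - 1) = real CARD('n) - 1"
      using card_ge_0_finite[of "UNIV::'n set"] by (simp add: of_nat_diff)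
    finally show ?thesis .
  qed
  have capA: "w\<^sup>2 * (\<mu>A - \<mu>T) \<le> \<mu>A - Nf i"
  proof -
    have ineq: "(\<integral>x. w\<^sup>2 * (indicator A x - indicator T x) \<partial>(sphere_unif :: (real^'n) measure))
        \<le> (\<integral>x. indicator A x - indicator A x * (x$i)\<^sup>2 \<partial>(sphere_unif :: (real^'n) measure))"
    proof (rule integral_mono_AE)
      show "integrable (sphere_unif :: (real^'n) measure) (\<lambda>x. w\<^sup>2 * (indicator A x - indicator T x))"
        using intI[OF A] intI[OF T] by simp
      show "integrable (sphere_unif :: (real^'n) measure) (\<lambda>x. indicator A x - indicator A x * (x$i)\<^sup>2)"
        using intI[OF A] intN[of i] by simp
      show "AE x in sphere_unif. w\<^sup>2 * (indicator A x - indicator T x) \<le> (indicator A x - indicator A x * (x$i)\<^sup>2 :: real)"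
        using AE_sphere_norm
      proof eventually_elim
        case (elim x)
        have "\<bar>x$i\<bar> \<le> 1" using elim by (rule comp_le1)
        then have xi1: "(x$i)\<^sup>2 \<le> 1" by (simp add: abs_square_le_1)
        show ?case
        proof (cases "t \<le> x$i")
          case True
          then show ?thesis using td xi1 by (simp add: A_def T_def indicator_def)
        next
          case nT: False
          show ?thesis
          proof (cases "\<delta> \<le> x$i")
            case True
            have "0 \<le> x$i" using True assms(1) by simp
            then have "(x$i)\<^sup>2 \<le> t\<^sup>2" using nT by (intro power_mono) auto
            then show ?thesis using True nT tw by (simp add: A_def T_def indicator_def)
          next
            case False
            then show ?thesis using nT by (simp add: A_def T_def indicator_def)
          qed
        qed
      qed
    qed
    have L: "(\<integral>x. w\<^sup>2 * (indicator A x - indicator T x) \<partial>(sphere_unif :: (real^'n) measure)) = w\<^sup>2 * (\<mu>A - \<mu>T)"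
      using intI[OF A] intI[OF T] intA intT by simp
    have R: "(\<integral>x. indicator A x - indicator A x * (x$i)\<^sup>2 \<partial>(sphere_unif :: (real^'n) measure)) = \<mu>A - Nf i"
      using intI[OF A] intN[of i] intA unfolding Nf_def by simp
    show ?thesis using ineq unfolding L R .
  qed
  have cap3: "3 * \<mu>T \<le> \<mu>A"
  proof -
    let ?R1 = "rot i j c (-s) :: real^'n \<Rightarrow> real^'n"
    let ?R2 = "rot i j c s :: real^'n \<Rightarrow> real^'n"
    have R1i: "(?R1 x)$i = c * x$i + s * x$j" for x by (simp add: rot_def)
    have R2i: "(?R2 x)$i = c * x$i - s * x$j" for x by (simp add: rot_def)
    have cs': "c\<^sup>2 + (-s)\<^sup>2 = 1" using cs by simp
    have cm: "c > -1" using c0 by simp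
    have iR1: "(\<integral>x. indicator T (?R1 x) \<partial>(sphere_unif :: (real^'n) measure)) = \<mu>T"
      using integral_rot[OF assms(3) cs' cm, of "indicator T"] intT by simp
    have iR2: "(\<integral>x. indicator T (?R2 x) \<partial>(sphere_unif :: (real^'n) measure)) = \<mu>T"
      using integral_rot[OF assms(3) cs cm, of "indicator T"] intT by simp
    have int1: "integrable (sphere_unif :: (real^'n) measure) (\<lambda>x. indicator T (?R1 x) :: real)"
      by (rule integrable_sphere[where B=1]) (auto simp: indicator_def)
    have int2: "integrable (sphere_unif :: (real^'n) measure) (\<lambda>x. indicator T (?R2 x) :: real)"
      by (rule integrable_sphere[where B=1]) (auto simp: indicator_def)
    have ineq: "(\<integral>x. indicator T x + indicator T (?R1 x) + indicator T (?R2 x) \<partial>(sphere_unif :: (real^'n) measure))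
        \<le> (\<integral>x. (indicator A x :: real) \<partial>(sphere_unif :: (real^'n) measure))"
    proof (rule integral_mono_AE)
      show "integrable (sphere_unif :: (real^'n) measure) (\<lambda>x. indicator T x + indicator T (?R1 x) + indicator T (?R2 x) :: real)"
        using intI[OF T] int1 int2 by simp
      show "integrable (sphere_unif :: (real^'n) measure) (\<lambda>x. indicator A x :: real)"
        using intI[OF A] by simp
      show "AE x in sphere_unif. indicator T x + indicator T (?R1 x) + indicator T (?R2 x) \<le> (indicator A x :: real)"
        using AE_sphere_norm
      proof eventually_elim
        case (elim x)
        define a where "a = x$i"
        define b where "b = x$j"
        have ab: "a\<^sup>2 + b\<^sup>2 \<le> 1" unfolding a_def b_def by (rule sq_le[OF assms(3) elim])
        have ab': "a\<^sup>2 + (-b)\<^sup>2 \<le> 1" using ab by simp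
        have n1: "\<not> (t \<le> a \<and> t \<le> c*a + s*b)" using G1[OF ab cs c0 t0 ct2] by blast
        have n2: "\<not> (t \<le> a \<and> t \<le> c*a - s*b)" using G1[OF ab cs' c0 t0 ct2] by auto
        have n3: "\<not> (t \<le> c*a + s*b \<and> t \<le> c*a - s*b)" using G3[OF ab c0 t0 ct] by blast
        have p1: "t \<le> c*a + s*b \<Longrightarrow> \<delta> \<le> a" using G4[OF ab cs tw c0 s0 w0 t0 dl] by blast
        have p2: "t \<le> c*a - s*b \<Longrightarrow> \<delta> \<le> a" using G4[OF ab' cs tw c0 s0 w0 t0 dl] by simp
        have p0: "t \<le> a \<Longrightarrow> \<delta> \<le> a" using td by simp
        show ?case using n1 n2 n3 p1 p2 p0
          by (simp add: indicator_def T_def A_def R1i R2i a_def[symmetric] b_def[symmetric])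
      qed
    qed
    have L: "(\<integral>x. indicator T x + indicator T (?R1 x) + indicator T (?R2 x) \<partial>(sphere_unif :: (real^'n) measure)) = 3 * \<mu>T"
      using intI[OF T] int1 int2 intT iR1 iR2 by simp
    show ?thesis using ineq unfolding L intA .
  qed
  have card2: "2 \<le> CARD('n)"
  proof -
    have "card {i,j} \<le> CARD('n)" by (rule card_mono) auto
    then show ?thesis using assms(3) by simp
  qed
  have c2eq: "c2 \<delta> i j = Nf j / \<mu>A"
    unfolding c2_def cond_expect_event_def set_lebesgue_integral_def Nf_def \<mu>A_def A_def
    by simp
  define d where "d = real CARD('n)"
  have d2: "2 \<le> d" using card2 by (simp add: d_def)
  have Nj: "(d - 1) * Nf j = \<mu>A - Nf i" using sum split by (simp add: d_def)
  have "w\<^sup>2 * ((2/3) * \<mu>A) \<le> w\<^sup>2 * (\<mu>A - \<mu>T)" using cap3 by (intro mult_left_mono) auto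
  with capA have low: "(2/3) * w\<^sup>2 * \<mu>A \<le> (d - 1) * Nf j" using Nj by simp
  have "(3/4 - \<delta>/2 - \<delta>\<^sup>2/4)^3 * \<mu>A \<le> 2*w\<^sup>2 * \<mu>A" using Kw \<mu>A0 by (intro mult_right_mono) auto
  also have "\<dots> \<le> 3 * ((d-1) * Nf j)" using low by simp
  also have "\<dots> \<le> 3 * (d * Nf j)"
  proof -
    have "0 \<le> (2/3) * w\<^sup>2 * \<mu>A" using \<mu>A0 by simp
    then have "0 \<le> (d-1) * Nf j" using low by linarith
    then have "0 \<le> Nf j" using d2 by (simp add: zero_le_mult_iff)
    then show ?thesis by (simp add: algebra_simps)
  qed
  finally have fin: "(3/4 - \<delta>/2 - \<delta>\<^sup>2/4)^3 * \<mu>A \<le> 3 * d * Nf j" by simp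
  have "(3/4 - \<delta>/2 - \<delta>\<^sup>2/4)^3 / (3*d) \<le> Nf j / \<mu>A"
    by (rule frac_le_helper) (use fin \<mu>A0 d2 in \<open>auto simp: mult_ac\<close>)
  then show ?thesis unfolding c2eq d_def[symmetric] by simp
qed

end
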